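(* Every mirror graph is harmonic-even. Equivalently (for partial cubes), if $G$ is a mirror graph with isometric dimension $i(G)$, then every vertex $v$ of $G$ has a vertex at distance exactly $i(G)$ from $v$.
   Context: All graphs are finite, simple and connected; $d$ denotes the shortest-path distance. A partition $\{E_1,\dots,E_k\}$ of $E(G)$ is a mirror partition if for every $i$ there is an automorphism $\alpha_i$ of $G$ such that (i) for every edge $uv\in E_i$, $\alpha_i(u)=v$ and $\alpha_i(v)=u$; (ii) $G-E_i$ has exactly two connected components $G_i^1,G_i^2$ and $\alpha_i$ maps $G_i^1$ isomorphically onto $G_i^2$. A graph with a mirror partition is a mirror graph. A partial cube is a graph admitting an isometric embedding into a hypercube $Q_d$. On edges define $ab\,\Theta\,xy$ iff $d(a,x)+d(b,y)\neq d(a,y)+d(b,x)$; in a partial cube $\Theta$ is an equivalence relation whose classes are the $\Theta$-classes, and the isometric dimension $i(G)$ is the number of $\Theta$-classes. Every mirror graph is a partial cube and its mirror partition coincides with the partition into $\Theta$-classes. A graph is even if every vertex $v$ has a unique vertex $\bar v$ at distance $\mathrm{diam}(G)$; it is harmonic-even if moreover $\bar u\bar v$ is an edge whenever $uv$ is an edge. A partial cube is harmonic-even iff every vertex has a vertex at distance $i(G)$ from it. *)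

theory Defs
  imports Main
begin

definition graph :: "'a set \<Rightarrow> ('a \<Rightarrow> 'a \<Rightarrow> bool) \<Rightarrow> bool" where
  "graph V E \<longleftrightarrow> finite V \<and> V \<noteq> {}
     \<and> (\<forall>u v. E u v \<longrightarrow> u \<in> V \<and> v \<in> V)
     \<and> (\<forall>u v. E u v \<longrightarrow> E v u)
     \<and> (\<forall>u. \<not> E u u)"

definition connected_graph :: "'a set \<Rightarrow> ('a \<Rightarrow> 'a \<Rightarrow> bool) \<Rightarrow> bool" where
  "connected_graph V E \<longleftrightarrow> graph V E \<and> (\<forall>u\<in>V. \<forall>v\<in>V. E\<^sup>*\<^sup>* u v)"

definition dist :: "('a \<Rightarrow> 'a \<Rightarrow> bool) \<Rightarrow> 'a \<Rightarrow> 'a \<Rightarrow> nat" where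
  "dist E u v = (LEAST n. (E ^^ n) u v)"

definition diam :: "'a set \<Rightarrow> ('a \<Rightarrow> 'a \<Rightarrow> bool) \<Rightarrow> nat" where
  "diam V E = Max {dist E u v | u v. u \<in> V \<and> v \<in> V}"

definition even_graph :: "'a set \<Rightarrow> ('a \<Rightarrow> 'a \<Rightarrow> bool) \<Rightarrow> bool" where
  "even_graph V E \<longleftrightarrow> (\<forall>v\<in>V. \<exists>!w. w \<in> V \<and> dist E v w = diam V E)"

definition antipode :: "'a set \<Rightarrow> ('a \<Rightarrow> 'a \<Rightarrow> bool) \<Rightarrow> 'a \<Rightarrow> 'a" where
  "antipode V E v = (THE w. w \<in> V \<and> dist E v w = diam V E)"

definition harmonic_even :: "'a set \<Rightarrow> ('a \<Rightarrow> 'a \<Rightarrow> bool) \<Rightarrow> bool" where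
  "harmonic_even V E \<longleftrightarrow> even_graph V E \<and>
     (\<forall>u v. E u v \<longrightarrow> E (antipode V E u) (antipode V E v))"

definition automorphism :: "'a set \<Rightarrow> ('a \<Rightarrow> 'a \<Rightarrow> bool) \<Rightarrow> ('a \<Rightarrow> 'a) \<Rightarrow> bool" where
  "automorphism V E \<alpha> \<longleftrightarrow> bij_betw \<alpha> V V \<and> (\<forall>u\<in>V. \<forall>v\<in>V. E u v \<longleftrightarrow> E (\<alpha> u) (\<alpha> v))"

definition edges :: "('a \<Rightarrow> 'a \<Rightarrow> bool) \<Rightarrow> 'a set set" where
  "edges E = {{u, v} | u v. E u v}"

definition del_edges :: "('a \<Rightarrow> 'a \<Rightarrow> bool) \<Rightarrow> 'a set set \<Rightarrow> 'a \<Rightarrow> 'a \<Rightarrow> bool" where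
  "del_edges E F = (\<lambda>u v. E u v \<and> {u, v} \<notin> F)"

definition components :: "'a set \<Rightarrow> ('a \<Rightarrow> 'a \<Rightarrow> bool) \<Rightarrow> 'a set set" where
  "components V E = {{w \<in> V. E\<^sup>*\<^sup>* v w} | v. v \<in> V}"

definition partition_of :: "'b set set \<Rightarrow> 'b set \<Rightarrow> bool" where
  "partition_of P S \<longleftrightarrow> (\<forall>X\<in>P. X \<noteq> {}) \<and> (\<forall>X\<in>P. \<forall>Y\<in>P. X \<noteq> Y \<longrightarrow> X \<inter> Y = {}) \<and> \<Union>P = S"

definition mirror_partition :: "'a set \<Rightarrow> ('a \<Rightarrow> 'a \<Rightarrow> bool) \<Rightarrow> 'a set set set \<Rightarrow> bool" where
  "mirror_partition V E P \<longleftrightarrow> partition_of P (edges E) \<and>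
     (\<forall>F\<in>P. \<exists>\<alpha>. automorphism V E \<alpha>
        \<and> (\<forall>u v. E u v \<and> {u, v} \<in> F \<longrightarrow> \<alpha> u = v \<and> \<alpha> v = u)
        \<and> (\<exists>C1 C2. components V (del_edges E F) = {C1, C2} \<and> C1 \<noteq> C2
             \<and> bij_betw \<alpha> C1 C2
             \<and> (\<forall>u\<in>C1. \<forall>v\<in>C1. del_edges E F u v \<longleftrightarrow> del_edges E F (\<alpha> u) (\<alpha> v))))"

definition mirror_graph :: "'a set \<Rightarrow> ('a \<Rightarrow> 'a \<Rightarrow> bool) \<Rightarrow> bool" where
  "mirror_graph V E \<longleftrightarrow> (\<exists>P. mirror_partition V E P)"

end

theory Submission
  imports Defs
begin

locale cg =
  fixes V :: "'a set" and E :: "'a \<Rightarrow> 'a \<Rightarrow> bool"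
  assumes cg: "connected_graph V E"
begin

lemma symE: "E u v \<Longrightarrow> E v u"
  using cg unfolding connected_graph_def graph_def by blast

lemma inV: "E u v \<Longrightarrow> u \<in> V \<and> v \<in> V"
  using cg unfolding connected_graph_def graph_def by blast

lemma irr: "\<not> E u u"
  using cg unfolding connected_graph_def graph_def by blast

lemma finV: "finite V" and neV: "V \<noteq> {}"
  using cg unfolding connected_graph_def graph_def by blast+

lemma conn: "u \<in> V \<Longrightarrow> v \<in> V \<Longrightarrow> E\<^sup>*\<^sup>* u v"
  using cg unfolding connected_graph_def by blast

lemma pow_sym: "(E ^^ n) u v \<Longrightarrow> (E ^^ n) v u"
proof (induction n arbitrary: u v)
  case 0 then show ?case by auto
next
  case (Suc n)
  then obtain y where "(E ^^ n) u y" "E y v" by (auto elim: relpowp_Suc_E)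
  then show ?case using Suc.IH symE by (meson relpowp_Suc_I2)
qed

lemma pow_V: "(E ^^ n) u v \<Longrightarrow> u \<in> V \<Longrightarrow> v \<in> V"
proof (induction n arbitrary: v)
  case 0 then show ?case by auto
next
  case (Suc n)
  then obtain y where "(E ^^ n) u y" "E y v" by (auto elim: relpowp_Suc_E)
  then show ?case using inV by blast
qed

lemma walk: "u \<in> V \<Longrightarrow> v \<in> V \<Longrightarrow> (E ^^ (dist E u v)) u v"
  unfolding dist_def using conn[of u v] rtranclp_power by (metis LeastI_ex)

lemma dist_le: "(E ^^ n) u v \<Longrightarrow> dist E u v \<le> n"
  unfolding dist_def by (rule Least_le)

lemma dist_sym: "u \<in> V \<Longrightarrow> v \<in> V \<Longrightarrow> dist E u v = dist E v u"
  by (meson antisym dist_le pow_sym walk)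

lemma dist_self: "dist E u u = 0"
  using dist_le[of 0 u u] by auto

lemma dist_0: "u \<in> V \<Longrightarrow> v \<in> V \<Longrightarrow> dist E u v = 0 \<Longrightarrow> u = v"
  using walk[of u v] by auto

lemma dist_edge: "E u v \<Longrightarrow> dist E u v = 1"
proof -
  assume e: "E u v"
  have "dist E u v \<le> 1" using dist_le[of 1 u v] e by auto
  moreover have "dist E u v \<noteq> 0" using dist_0 e inV irr by metis
  ultimately show ?thesis by auto
qed

lemma dist_1: "u \<in> V \<Longrightarrow> v \<in> V \<Longrightarrow> dist E u v = 1 \<Longrightarrow> E u v"
  using walk[of u v] by auto

lemma tri: "u \<in> V \<Longrightarrow> v \<in> V \<Longrightarrow> w \<in> V \<Longrightarrow> dist E u w \<le> dist E u v + dist E v w"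
  by (meson dist_le relpowp_trans walk)

lemma dist_Suc: assumes "u \<in> V" "v \<in> V" "dist E u v = Suc n"
  shows "\<exists>y. y \<in> V \<and> E y v \<and> dist E u y = n"
proof -
  from walk[OF assms(1,2)] assms(3) obtain y where y: "(E ^^ n) u y" "E y v"
    by (auto elim: relpowp_Suc_E)
  have yV: "y \<in> V" using y inV by blast
  have "dist E u y \<le> n" using dist_le y by blast
  moreover have "dist E u v \<le> dist E u y + dist E y v" using tri assms yV by blast
  moreover have "dist E y v = 1" using dist_edge y by blast
  ultimately show ?thesis using yV y assms by auto
qed

definition D where "D = diam V E"

lemma finset: "finite {dist E u v | u v. u \<in> V \<and> v \<in> V}"
proof -
  have "{dist E u v | u v. u \<in> V \<and> v \<in> V} = (\<lambda>(u,v). dist E u v) ` (V \<times> V)" by auto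
  then show ?thesis using finV by simp
qed

lemma le_diam: "u \<in> V \<Longrightarrow> v \<in> V \<Longrightarrow> dist E u v \<le> D"
  unfolding D_def diam_def using finset by (intro Max_ge) auto

lemma diam_att: "\<exists>u\<in>V. \<exists>v\<in>V. dist E u v = D"
proof -
  have "{dist E u v | u v. u \<in> V \<and> v \<in> V} \<noteq> {}" using neV by auto
  then have "D \<in> {dist E u v | u v. u \<in> V \<and> v \<in> V}"
    unfolding D_def diam_def using finset Max_in by blast
  then obtain u v where "D = dist E u v" "u \<in> V" "v \<in> V" by blast
  then show ?thesis by metis
qed

definition refl where
  "refl S \<beta> \<longleftrightarrow> S \<subseteq> V \<and> (\<forall>x\<in>V. \<beta> x \<in> V) \<and> (\<forall>x\<in>V. \<beta> (\<beta> x) = x)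
     \<and> (\<forall>x y. E x y \<longrightarrow> E (\<beta> x) (\<beta> y)) \<and> (\<forall>x\<in>V. \<beta> x \<in> S \<longleftrightarrow> x \<notin> S)
     \<and> (\<forall>x y. E x y \<and> (x \<in> S \<longleftrightarrow> y \<notin> S) \<longrightarrow> \<beta> x = y)"

lemma refl_pow: "refl S \<beta> \<Longrightarrow> (E ^^ n) u v \<Longrightarrow> (E ^^ n) (\<beta> u) (\<beta> v)"
proof (induction n arbitrary: v)
  case 0 then show ?case by auto
next
  case (Suc n)
  then obtain y where "(E ^^ n) u y" "E y v" by (auto elim: relpowp_Suc_E)
  then have "(E ^^ n) (\<beta> u) (\<beta> y)" "E (\<beta> y) (\<beta> v)" using Suc unfolding refl_def by auto
  then show ?case by (rule relpowp_Suc_I)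
qed

lemma refl_dist: assumes "refl S \<beta>" "u \<in> V" "v \<in> V"
  shows "dist E (\<beta> u) (\<beta> v) = dist E u v"
proof -
  have a: "dist E (\<beta> u) (\<beta> v) \<le> dist E u v" using refl_pow[OF assms(1) walk[OF assms(2,3)]] dist_le by blast
  have bu: "\<beta> u \<in> V" "\<beta> v \<in> V" using assms unfolding refl_def by auto
  have "dist E (\<beta> (\<beta> u)) (\<beta> (\<beta> v)) \<le> dist E (\<beta> u) (\<beta> v)"
    using refl_pow[OF assms(1) walk[OF bu]] dist_le by blast
  then show ?thesis using a assms unfolding refl_def by auto
qed

lemma cross: "(E ^^ n) a c \<Longrightarrow> a \<in> T \<Longrightarrow> c \<notin> T \<Longrightarrow>
  \<exists>i j p q. i + j + 1 = n \<and> (E ^^ i) a p \<and> E p q \<and> (E ^^ j) q c \<and> p \<in> T \<and> q \<notin> T"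
proof (induction n arbitrary: c)
  case 0 then show ?case by auto
next
  case (Suc n)
  then obtain y where y: "(E ^^ n) a y" "E y c" by (auto elim: relpowp_Suc_E)
  show ?case
  proof (cases "y \<in> T")
    case True
    then show ?thesis using y Suc by (intro exI[of _ n] exI[of _ 0]) auto
  next
    case False
    then obtain i j p q where "i + j + 1 = n" "(E ^^ i) a p" "E p q" "(E ^^ j) q y" "p \<in> T" "q \<notin> T"
      using Suc.IH[OF y(1) Suc.prems(2)] by blast
    then show ?thesis using y by (intro exI[of _ i] exI[of _ "Suc j"]) (auto intro: relpowp_Suc_I)
  qed
qed

lemma lemX: assumes r: "refl S \<beta>" and xV: "x \<in> V" and bV: "b \<in> V" and side: "x \<in> S \<longleftrightarrow> b \<in> S"
  shows "dist E x b + 1 \<le> dist E x (\<beta> b)"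
proof -
  define T where "T = (if x \<in> S then S else - S)"
  have bbV: "\<beta> b \<in> V" using r bV unfolding refl_def by auto
  have xT: "x \<in> T" and bT: "\<beta> b \<notin> T" using r bV side unfolding T_def refl_def by auto
  obtain i j p q where ij: "i + j + 1 = dist E x (\<beta> b)" "(E ^^ i) x p" "E p q" "(E ^^ j) q (\<beta> b)" "p \<in> T" "q \<notin> T"
    using cross[OF walk[OF xV bbV] xT bT] by blast
  have "q \<in> S \<longleftrightarrow> p \<notin> S" using ij(5,6) unfolding T_def by (auto split: if_splits)
  then have bq: "\<beta> q = p" using r symE[OF ij(3)] unfolding refl_def by blast
  have "(E ^^ j) (\<beta> q) (\<beta> (\<beta> b))" using refl_pow[OF r ij(4)] .
  then have "(E ^^ j) p b" using bq r bV unfolding refl_def by auto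
  then have "(E ^^ (i + j)) x b" using relpowp_trans[OF ij(2)] by blast
  then show ?thesis using dist_le ij(1) by fastforce
qed

lemma rtr_sym: assumes s: "\<And>x y. R x y \<Longrightarrow> R y x" shows "R\<^sup>*\<^sup>* a b \<Longrightarrow> R\<^sup>*\<^sup>* b a"
proof (induction rule: rtranclp_induct)
  case base then show ?case by simp
next
  case (step y z)
  show ?case using converse_rtranclp_into_rtranclp[OF s[OF step(2)] step(3)] .
qed

lemma ex_refl: assumes mg: "mirror_graph V E" and e: "E u v"
  shows "\<exists>S \<beta>. refl S \<beta> \<and> \<beta> u = v"
proof -
  obtain P where mp: "mirror_partition V E P" using mg unfolding mirror_graph_def by blast
  have "{u, v} \<in> edges E" using e unfolding edges_def by blast
  moreover have "\<Union>P = edges E" using mp unfolding mirror_partition_def partition_of_def by (elim conjE)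
  ultimately obtain F where FP: "F \<in> P" and uvF: "{u, v} \<in> F" by blast
  have all: "\<forall>F\<in>P. \<exists>\<alpha>. automorphism V E \<alpha>
        \<and> (\<forall>u v. E u v \<and> {u, v} \<in> F \<longrightarrow> \<alpha> u = v \<and> \<alpha> v = u)
        \<and> (\<exists>C1 C2. components V (del_edges E F) = {C1, C2} \<and> C1 \<noteq> C2
             \<and> bij_betw \<alpha> C1 C2
             \<and> (\<forall>u\<in>C1. \<forall>v\<in>C1. del_edges E F u v \<longleftrightarrow> del_edges E F (\<alpha> u) (\<alpha> v)))"
    using mp unfolding mirror_partition_def by (rule conjunct2)
  have "\<exists>\<alpha>. automorphism V E \<alpha>
        \<and> (\<forall>u v. E u v \<and> {u, v} \<in> F \<longrightarrow> \<alpha> u = v \<and> \<alpha> v = u)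
        \<and> (\<exists>C1 C2. components V (del_edges E F) = {C1, C2} \<and> C1 \<noteq> C2
             \<and> bij_betw \<alpha> C1 C2
             \<and> (\<forall>u\<in>C1. \<forall>v\<in>C1. del_edges E F u v \<longleftrightarrow> del_edges E F (\<alpha> u) (\<alpha> v)))"
    using all FP by (rule bspec)
  then obtain \<alpha> where h: "automorphism V E \<alpha>
        \<and> (\<forall>u v. E u v \<and> {u, v} \<in> F \<longrightarrow> \<alpha> u = v \<and> \<alpha> v = u)
        \<and> (\<exists>C1 C2. components V (del_edges E F) = {C1, C2} \<and> C1 \<noteq> C2
             \<and> bij_betw \<alpha> C1 C2
             \<and> (\<forall>u\<in>C1. \<forall>v\<in>C1. del_edges E F u v \<longleftrightarrow> del_edges E F (\<alpha> u) (\<alpha> v)))" by (elim exE)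
  have au: "automorphism V E \<alpha>" using h by (elim conjE)
  have sw0: "\<forall>u v. E u v \<and> {u, v} \<in> F \<longrightarrow> \<alpha> u = v \<and> \<alpha> v = u" using h by (elim conjE)
  have ex: "(\<exists>C1 C2. components V (del_edges E F) = {C1, C2} \<and> C1 \<noteq> C2
             \<and> bij_betw \<alpha> C1 C2
             \<and> (\<forall>u\<in>C1. \<forall>v\<in>C1. del_edges E F u v \<longleftrightarrow> del_edges E F (\<alpha> u) (\<alpha> v)))" using h by (elim conjE)
  have sw: "\<And>x y. E x y \<and> {x, y} \<in> F \<Longrightarrow> \<alpha> x = y \<and> \<alpha> y = x" using sw0 by blast
  from ex obtain C1 C2 where h2: "components V (del_edges E F) = {C1, C2} \<and> C1 \<noteq> C2
             \<and> bij_betw \<alpha> C1 C2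
             \<and> (\<forall>u\<in>C1. \<forall>v\<in>C1. del_edges E F u v \<longleftrightarrow> del_edges E F (\<alpha> u) (\<alpha> v))" by (elim exE)
  have comp: "components V (del_edges E F) = {C1, C2}" using h2 by (elim conjE)
  have ne: "C1 \<noteq> C2" using h2 by (elim conjE)
  have bij: "bij_betw \<alpha> C1 C2" using h2 by (elim conjE)
  define R where "R = del_edges E F"
  have Rs: "\<And>x y. R x y \<Longrightarrow> R y x" unfolding R_def del_edges_def using symE by (auto simp: insert_commute)
  have RE: "\<And>x y. R x y \<Longrightarrow> E x y" unfolding R_def del_edges_def by auto
  have compR: "components V R = {C1, C2}" using comp R_def by simp
  have "C1 \<in> components V R" using compR by simp
  then have C1f: "\<exists>c. c \<in> V \<and> C1 = {w \<in> V. R\<^sup>*\<^sup>* c w}" unfolding components_def by blast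
  have "C2 \<in> components V R" using compR by simp
  then have C2f: "\<exists>c. c \<in> V \<and> C2 = {w \<in> V. R\<^sup>*\<^sup>* c w}" unfolding components_def by blast
  have closed: "\<And>C x y. (\<exists>c. c \<in> V \<and> C = {w \<in> V. R\<^sup>*\<^sup>* c w}) \<Longrightarrow> x \<in> C \<Longrightarrow> R x y \<Longrightarrow> y \<in> C"
  proof -
    fix C x y assume "\<exists>c. c \<in> V \<and> C = {w \<in> V. R\<^sup>*\<^sup>* c w}" "x \<in> C" "R x y"
    then obtain c where c: "C = {w \<in> V. R\<^sup>*\<^sup>* c w}" "R\<^sup>*\<^sup>* c x" by blast
    have "R\<^sup>*\<^sup>* c y" using c(2) \<open>R x y\<close> by (rule rtranclp.rtrancl_into_rtrancl)
    moreover have "y \<in> V" using RE inV \<open>R x y\<close> by blast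
    ultimately show "y \<in> C" using c(1) by blast
  qed
  have cl1: "\<And>x y. x \<in> C1 \<Longrightarrow> R x y \<Longrightarrow> y \<in> C1" using closed C1f by blast
  have cl2: "\<And>x y. x \<in> C2 \<Longrightarrow> R x y \<Longrightarrow> y \<in> C2" using closed C2f by blast
  have sub1: "C1 \<subseteq> V" and sub2: "C2 \<subseteq> V" using C1f C2f by auto
  have cover: "\<And>x. x \<in> V \<Longrightarrow> x \<in> C1 \<or> x \<in> C2"
  proof -
    fix x assume xV: "x \<in> V"
    have "{w \<in> V. R\<^sup>*\<^sup>* x w} \<in> components V R" unfolding components_def using xV by blast
    moreover have "x \<in> {w \<in> V. R\<^sup>*\<^sup>* x w}" using xV by auto
    ultimately show "x \<in> C1 \<or> x \<in> C2" using compR by auto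
  qed
  have disj: "\<And>x. x \<in> C1 \<Longrightarrow> x \<in> C2 \<Longrightarrow> False"
  proof -
    fix x assume x1: "x \<in> C1" and x2: "x \<in> C2"
    obtain c1 where c1: "c1 \<in> V" "C1 = {w \<in> V. R\<^sup>*\<^sup>* c1 w}" using C1f by blast
    obtain c2 where c2: "c2 \<in> V" "C2 = {w \<in> V. R\<^sup>*\<^sup>* c2 w}" using C2f by blast
    have a: "R\<^sup>*\<^sup>* c1 x" "R\<^sup>*\<^sup>* c2 x" using x1 x2 c1 c2 by auto
    have "R\<^sup>*\<^sup>* c1 c2" using rtranclp_trans[OF a(1) rtr_sym[of R, OF Rs a(2)]] .
    moreover have "R\<^sup>*\<^sup>* c2 c1" using rtr_sym[of R, OF Rs calculation] .
    ultimately have "\<And>w. R\<^sup>*\<^sup>* c1 w \<longleftrightarrow> R\<^sup>*\<^sup>* c2 w" by (meson rtranclp_trans)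
    then have "C1 = C2" using c1 c2 by simp
    then show False using ne by simp
  qed
  have crossF: "\<And>x y. E x y \<Longrightarrow> x \<in> C1 \<Longrightarrow> y \<notin> C1 \<Longrightarrow> {x, y} \<in> F"
  proof (rule ccontr)
    fix x y assume "E x y" "x \<in> C1" "y \<notin> C1" "{x, y} \<notin> F"
    then have "R x y" unfolding R_def del_edges_def by auto
    then show False using cl1 \<open>x \<in> C1\<close> \<open>y \<notin> C1\<close> by blast
  qed
  have inj1: "inj_on \<alpha> C1" using bij bij_betw_imp_inj_on by blast
  have img1: "\<alpha> ` C1 = C2" using bij bij_betw_imp_surj_on by blast
  have injV: "inj_on \<alpha> V" and imgV: "\<alpha> ` V = V" using au unfolding automorphism_def bij_betw_def by auto
  have a12: "\<And>x. x \<in> C1 \<Longrightarrow> \<alpha> x \<in> C2" using img1 by blast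
  have a21: "\<And>x. x \<in> C2 \<Longrightarrow> \<alpha> x \<in> C1"
  proof -
    fix x assume x2: "x \<in> C2"
    have "\<alpha> x \<in> V" using imgV x2 sub2 by blast
    moreover have "\<alpha> x \<notin> C2"
    proof
      assume "\<alpha> x \<in> C2"
      then obtain c where "c \<in> C1" "\<alpha> c = \<alpha> x" using img1 by force
      then have "c = x" using injV sub1 sub2 x2 by (meson inj_onD subsetD)
      then show False using disj \<open>c \<in> C1\<close> x2 by blast
    qed
    ultimately show "\<alpha> x \<in> C1" using cover by blast
  qed
  have Fcross: "\<And>x y. E x y \<Longrightarrow> {x, y} \<in> F \<Longrightarrow> (x \<in> C1 \<longleftrightarrow> y \<notin> C1)"
  proof -
    fix x y assume xy: "E x y" "{x, y} \<in> F"
    have ax: "\<alpha> x = y" using sw xy by blast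
    have xV: "x \<in> V" "y \<in> V" using inV xy by auto
    show "x \<in> C1 \<longleftrightarrow> y \<notin> C1"
      using a12[of x] a21[of x] ax cover[OF xV(1)] cover[OF xV(2)] disj by blast
  qed
  define \<beta> where "\<beta> x = (if x \<in> C1 then \<alpha> x else the_inv_into C1 \<alpha> x)" for x
  have b2: "\<And>x. x \<in> C2 \<Longrightarrow> \<beta> x \<in> C1 \<and> \<alpha> (\<beta> x) = x"
  proof -
    fix x assume x2: "x \<in> C2"
    have n1: "x \<notin> C1" using disj x2 by blast
    have bx: "\<beta> x = the_inv_into C1 \<alpha> x" unfolding \<beta>_def using n1 by simp
    have xi: "x \<in> \<alpha> ` C1" using x2 img1 by simp
    show "\<beta> x \<in> C1 \<and> \<alpha> (\<beta> x) = x" unfolding bx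
      using the_inv_into_into[OF inj1 xi subset_refl] f_the_inv_into_f[OF inj1 xi] by simp
  qed
  have b1: "\<And>x. x \<in> C1 \<Longrightarrow> \<beta> x = \<alpha> x" unfolding \<beta>_def by simp
  have r1: "\<forall>x\<in>V. \<beta> x \<in> V"
  proof
    fix x assume "x \<in> V"
    then consider "x \<in> C1" | "x \<in> C2" using cover by blast
    then show "\<beta> x \<in> V"
    proof cases
      case 1 then have "\<beta> x \<in> C2" using b1 a12 by simp
      then show ?thesis using sub2 by blast
    next
      case 2 then have "\<beta> x \<in> C1" using b2 by simp
      then show ?thesis using sub1 by blast
    qed
  qed
  have r2: "\<forall>x\<in>V. \<beta> (\<beta> x) = x"
  proof
    fix x assume xV: "x \<in> V"
    show "\<beta> (\<beta> x) = x"
    proof (cases "x \<in> C1")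
      case True
      then have "\<alpha> x \<in> C2" "\<alpha> x \<notin> C1" using a12 disj by blast+
      then have "\<beta> (\<alpha> x) = the_inv_into C1 \<alpha> (\<alpha> x)" unfolding \<beta>_def by simp
      then show ?thesis using True b1 the_inv_into_f_f[OF inj1 True] by simp
    next
      case False
      then have "x \<in> C2" using cover xV by blast
      then have "\<beta> x \<in> C1" "\<alpha> (\<beta> x) = x" using b2 by auto
      then show ?thesis using b1 by simp
    qed
  qed
  have r4: "\<forall>x\<in>V. \<beta> x \<in> C1 \<longleftrightarrow> x \<notin> C1"
  proof
    fix x assume "x \<in> V"
    then consider "x \<in> C1" | "x \<in> C2" using cover by blast
    then show "\<beta> x \<in> C1 \<longleftrightarrow> x \<notin> C1"
    proof cases
      case 1 then have "\<beta> x \<in> C2" using b1 a12 by simp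
      then show ?thesis using 1 disj by blast
    next
      case 2 then have "\<beta> x \<in> C1" using b2 by simp
      then show ?thesis using 2 disj by blast
    qed
  qed
  have r5: "\<forall>x y. E x y \<and> (x \<in> C1 \<longleftrightarrow> y \<notin> C1) \<longrightarrow> \<beta> x = y"
  proof (intro allI impI)
    fix x y assume h: "E x y \<and> (x \<in> C1 \<longleftrightarrow> y \<notin> C1)"
    have xV: "x \<in> V" "y \<in> V" using inV h by auto
    show "\<beta> x = y"
    proof (cases "x \<in> C1")
      case True
      then have "{x, y} \<in> F" using crossF h by blast
      then show ?thesis using sw h b1 True by blast
    next
      case False
      then have "y \<in> C1" using h by blast
      have "{y, x} \<in> F" using crossF symE h False \<open>y \<in> C1\<close> by blast
      then have "\<alpha> y = x" using sw symE h by blast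
      moreover have "x \<in> C2" using False cover xV by blast
      ultimately show ?thesis using b2[of x] inj1 \<open>y \<in> C1\<close> by (metis inj_onD)
    qed
  qed
  have r3: "\<forall>x y. E x y \<longrightarrow> E (\<beta> x) (\<beta> y)"
  proof (intro allI impI)
    fix x y assume xy: "E x y"
    have xV: "x \<in> V" "y \<in> V" using inV xy by auto
    show "E (\<beta> x) (\<beta> y)"
    proof (cases "x \<in> C1 \<longleftrightarrow> y \<notin> C1")
      case True
      then have "\<beta> x = y" "\<beta> y = x" using r5 xy symE by blast+
      then show ?thesis using symE xy by simp
    next
      case False
      show ?thesis
      proof (cases "x \<in> C1")
        case True
        then have "y \<in> C1" using False by blast
        then show ?thesis using True b1 au xy xV unfolding automorphism_def by simp
      next
        case nc: False
        then have "x \<in> C2" "y \<in> C2" using False cover xV by blast+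
        then have bb: "\<beta> x \<in> C1" "\<alpha> (\<beta> x) = x" "\<beta> y \<in> C1" "\<alpha> (\<beta> y) = y" using b2 by auto
        then show ?thesis using au xy sub1 unfolding automorphism_def by (metis subsetD)
      qed
    qed
  qed
  have "refl C1 \<beta>" unfolding refl_def using sub1 r1 r2 r3 r4 r5 by blast
  moreover have "\<beta> u = v" using r5 Fcross[OF e uvF] e by blast
  ultimately show ?thesis by blast
qed

lemma ecc: assumes mg: "mirror_graph V E" and vV: "v \<in> V"
  shows "\<exists>w\<in>V. dist E v w = D"
proof -
  obtain v0 w0 where v0: "v0 \<in> V" "w0 \<in> V" "dist E v0 w0 = D" using diam_att by blast
  have "E\<^sup>*\<^sup>* v0 v" using conn v0(1) vV by blast
  then show ?thesis
  proof (induction rule: rtranclp_induct)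
    case base then show ?case using v0 by blast
  next
    case (step y z)
    obtain w where w: "w \<in> V" "dist E y w = D" using step.IH by blast
    obtain S \<beta> where r: "refl S \<beta>" "\<beta> y = z" using ex_refl[OF mg step(2)] by blast
    have yV: "y \<in> V" using inV step(2) by blast
    have "\<beta> w \<in> V" using r w unfolding refl_def by blast
    moreover have "dist E z (\<beta> w) = D" using refl_dist[OF r(1) yV w(1)] r(2) w(2) by simp
    ultimately show ?case by blast
  qed
qed

lemma opp: assumes r: "refl S \<beta>" and xV: "x \<in> V" and zV: "z \<in> V" and d: "dist E x z = D"
  shows "x \<in> S \<longleftrightarrow> z \<notin> S"
proof (rule ccontr)
  assume "\<not> (x \<in> S \<longleftrightarrow> z \<notin> S)"
  then have "x \<in> S \<longleftrightarrow> z \<in> S" by blast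
  then have "dist E x z + 1 \<le> dist E x (\<beta> z)" using lemX[OF r xV zV] by blast
  moreover have "\<beta> z \<in> V" using r zV unfolding refl_def by blast
  ultimately show False using le_diam[OF xV] d by fastforce
qed

lemma key: assumes mg: "mirror_graph V E" and xV: "x \<in> V" and xbV: "xb \<in> V" and d: "dist E x xb = D"
  shows "y \<in> V \<Longrightarrow> dist E x y + dist E y xb = D"
proof (induction "dist E x y" arbitrary: y)
  case 0
  then have "y = x" using dist_0 xV by metis
  then show ?case using d dist_self by simp
next
  case (Suc n)
  obtain y' where y': "y' \<in> V" "E y' y" "dist E x y' = n" using dist_Suc[OF xV Suc.prems] Suc.hyps(2) by metis
  have IH: "n + dist E y' xb = D" using Suc.hyps(1)[of y'] y' by simp
  obtain S \<beta> where r: "refl S \<beta>" "\<beta> y' = y" using ex_refl[OF mg y'(2)] by blast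
  have bby: "\<beta> y = y'" using r y' unfolding refl_def by blast
  have s1: "x \<in> S \<longleftrightarrow> y \<notin> S"
  proof (rule ccontr)
    assume "\<not> (x \<in> S \<longleftrightarrow> y \<notin> S)"
    then have "x \<in> S \<longleftrightarrow> y \<in> S" by blast
    then have "dist E x y + 1 \<le> dist E x (\<beta> y)" using lemX[OF r(1) xV Suc.prems] by blast
    then show False using bby y' Suc.hyps(2) by simp
  qed
  have s2: "x \<in> S \<longleftrightarrow> xb \<notin> S" using opp[OF r(1) xV xbV d] .
  have "xb \<in> S \<longleftrightarrow> y \<in> S" using s1 s2 by blast
  then have "dist E xb y + 1 \<le> dist E xb (\<beta> y)" using lemX[OF r(1) xbV Suc.prems] by blast
  then have a: "dist E y xb + 1 \<le> dist E y' xb" using bby dist_sym xbV Suc.prems y'(1) by simp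
  have b: "dist E x xb \<le> dist E x y + dist E y xb" using tri xV Suc.prems xbV by blast
  show ?case using a b IH d Suc.hyps(2) by linarith
qed


end


theorem lemma1:
  fixes V :: "'a set" and E :: "'a \<Rightarrow> 'a \<Rightarrow> bool"
  assumes "connected_graph V E"
    and "mirror_graph V E"
  shows "harmonic_even V E"
proof -
  interpret cg V E using assms(1) by unfold_locales
  have Dd: "diam V E = D" by (simp add: D_def)
  have uniq: "\<And>v w w'. v \<in> V \<Longrightarrow> w \<in> V \<Longrightarrow> w' \<in> V \<Longrightarrow> dist E v w = D \<Longrightarrow> dist E v w' = D \<Longrightarrow> w = w'"
  proof -
    fix v w w' assume h: "v \<in> V" "w \<in> V" "w' \<in> V" "dist E v w = D" "dist E v w' = D"
    have "dist E v w + dist E w w' = D" using key[OF assms(2) h(1) h(3) h(5) h(2)] .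
    then have "dist E w w' = 0" using h(4) by simp
    then show "w = w'" using dist_0 h(2,3) by blast
  qed
  have ex1: "\<And>v. v \<in> V \<Longrightarrow> \<exists>!w. w \<in> V \<and> dist E v w = diam V E"
    unfolding Dd using ecc[OF assms(2)] uniq by blast
  have ev: "even_graph V E" unfolding even_graph_def using ex1 by blast
  have anti: "\<And>v. v \<in> V \<Longrightarrow> antipode V E v \<in> V \<and> dist E v (antipode V E v) = D"
  proof -
    fix v assume "v \<in> V"
    from theI'[OF ex1[OF this]] show "antipode V E v \<in> V \<and> dist E v (antipode V E v) = D"
      unfolding antipode_def Dd .
  qed
  have harm: "\<And>u v. E u v \<Longrightarrow> E (antipode V E u) (antipode V E v)"
  proof -
    fix u v assume e: "E u v"
    have uV: "u \<in> V" and vV: "v \<in> V" using inV e by auto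
    have au: "antipode V E u \<in> V" "dist E u (antipode V E u) = D" using anti uV by auto
    have av: "antipode V E v \<in> V" "dist E v (antipode V E v) = D" using anti vV by auto
    have 1: "dist E u v + dist E v (antipode V E u) = D" using key[OF assms(2) uV au(1) au(2) vV] .
    have 2: "dist E v (antipode V E u) + dist E (antipode V E u) (antipode V E v) = D"
      using key[OF assms(2) vV av(1) av(2) au(1)] .
    have "dist E u v = 1" using dist_edge e by blast
    then have "dist E (antipode V E u) (antipode V E v) = 1" using 1 2 by linarith
    then show "E (antipode V E u) (antipode V E v)" using dist_1 au(1) av(1) by blast
  qed
  show ?thesis unfolding harmonic_even_def using ev harm by blast
qed

end
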